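(* Let $N\geq 2$ and let $\Sigma$ be the one-sided shift on $\{0,1,\dots,N-1\}^{\mathbb{N}_0}$, ordered lexicographically. Then for every $L\geq N+2$, $\Sigma$ has forbidden root patterns of length $L$.
   Context: $\{0,1,\dots,N-1\}^{\mathbb{N}_0}$ is the set of sequences $\omega=(\omega_0,\omega_1,\dots)$ with $\omega_n\in\{0,\dots,N-1\}$, and $\Sigma(\omega_0,\omega_1,\dots)=(\omega_1,\omega_2,\dots)$; $\omega<\omega'$ lexicographically iff at the first index $n$ where they differ, $\omega_n<\omega'_n$. $\mathcal{S}_L$ is the set of permutations $\pi=[\pi_0,\dots,\pi_{L-1}]$ of $\{0,\dots,L-1\}$. $\omega$ defines $\pi$ if $\Sigma^{\pi_0}(\omega)<\dots<\Sigma^{\pi_{L-1}}(\omega)$; $\pi$ is forbidden if no $\omega$ defines it. For $\pi\in\mathcal{S}_L$ and $M>L$, a pattern $\sigma=[\sigma_0,\dots,\sigma_{M-1}]\in\mathcal{S}_M$ is an outgrowth pattern of $\pi$ if there exist $n\in\{0,1,\dots,M-L\}$ and indices $i_0<i_1<\dots<i_{L-1}$ with $\sigma_{i_k}=\pi_k+n$ for $k=0,\dots,L-1$ (equivalently, $\sigma^{-1}$ contains $\pi^{-1}$ as a consecutive pattern). A forbidden root pattern is a forbidden pattern that is not an outgrowth pattern of any forbidden pattern of shorter length. *)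

theory Defs
  imports Main
begin

definition seqs :: "nat \<Rightarrow> (nat \<Rightarrow> nat) set" where
  "seqs N = {\<omega>. \<forall>n. \<omega> n < N}"

definition shift_pow :: "nat \<Rightarrow> (nat \<Rightarrow> nat) \<Rightarrow> (nat \<Rightarrow> nat)" where
  "shift_pow k \<omega> = (\<lambda>n. \<omega> (n + k))"

definition lex_less :: "(nat \<Rightarrow> nat) \<Rightarrow> (nat \<Rightarrow> nat) \<Rightarrow> bool" where
  "lex_less \<omega> \<omega>' \<longleftrightarrow> (\<exists>n. (\<forall>m<n. \<omega> m = \<omega>' m) \<and> \<omega> n < \<omega>' n)"

definition perms :: "nat \<Rightarrow> nat list set" where
  "perms L = {\<pi>. length \<pi> = L \<and> distinct \<pi> \<and> set \<pi> = {0..<L}}"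

definition defines_pat :: "(nat \<Rightarrow> nat) \<Rightarrow> nat list \<Rightarrow> bool" where
  "defines_pat \<omega> \<pi> \<longleftrightarrow>
     (\<forall>k. Suc k < length \<pi> \<longrightarrow> lex_less (shift_pow (\<pi> ! k) \<omega>) (shift_pow (\<pi> ! Suc k) \<omega>))"

definition forbidden :: "nat \<Rightarrow> nat list \<Rightarrow> bool" where
  "forbidden N \<pi> \<longleftrightarrow> \<pi> \<in> perms (length \<pi>) \<and> \<not> (\<exists>\<omega>\<in>seqs N. defines_pat \<omega> \<pi>)"

definition outgrowth :: "nat list \<Rightarrow> nat list \<Rightarrow> bool" where
  "outgrowth \<sigma> \<pi> \<longleftrightarrow>
     \<sigma> \<in> perms (length \<sigma>) \<and> \<pi> \<in> perms (length \<pi>) \<and> length \<sigma> > length \<pi> \<and>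
     (\<exists>n \<le> length \<sigma> - length \<pi>. \<exists>i :: nat \<Rightarrow> nat.
        (\<forall>k l. k < l \<and> l < length \<pi> \<longrightarrow> i k < i l) \<and>
        (\<forall>k < length \<pi>. i k < length \<sigma> \<and> \<sigma> ! (i k) = \<pi> ! k + n))"

definition forbidden_root :: "nat \<Rightarrow> nat list \<Rightarrow> bool" where
  "forbidden_root N \<pi> \<longleftrightarrow> forbidden N \<pi> \<and>
     \<not> (\<exists>\<pi>'. length \<pi>' < length \<pi> \<and> forbidden N \<pi>' \<and> outgrowth \<pi> \<pi>')"

end

theory Submission
  imports Defs
begin
definition zz :: "nat \<Rightarrow> nat \<Rightarrow> nat" where
 "zz N p = (if even (N - p) then (N - p) div 2 else (N + p + 1) div 2)"
definition rk :: "nat \<Rightarrow> nat \<Rightarrow> nat \<Rightarrow> nat" where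
 "rk N L p = (if p = L - 1 then L - 1 else if p = L - 2 then 0 else if N - 1 \<le> p then L + N - 3 - p else zz N p)"
definition ps :: "nat \<Rightarrow> nat \<Rightarrow> nat \<Rightarrow> nat" where
 "ps N L k = (if k = L - 1 then L - 1 else if k = 0 then L - 2 else if N \<le> k then L + N - 3 - k
     else if 2*k \<le> N then N - 2*k else 2*k - N - 1)"

lemma zz1: "2*k \<le> N \<Longrightarrow> zz N (N - 2*k) = k"
  unfolding zz_def by simp
lemma zz2: "N < 2*k \<Longrightarrow> k < N \<Longrightarrow> zz N (2*k - N - 1) = k"
  unfolding zz_def by (simp add: even_iff_mod_2_eq_zero) presburger
lemma zz_inv: assumes "p \<le> N - 2" "N \<ge> 2" shows "1 \<le> zz N p \<and> zz N p \<le> N - 1 \<and>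
   (if 2 * zz N p \<le> N then N - 2 * zz N p else 2 * zz N p - N - 1) = p"
proof (cases "even (N - p)")
  case True
  then obtain j where j: "N - p = 2*j" by blast
  have "zz N p = j" unfolding zz_def using True j by simp
  then show ?thesis using j assms by auto
next
  case False
  then obtain j where j: "N - p = 2*j + 1" using oddE by blast
  have "N + p + 1 = 2 * (p + j + 1)" using j assms(1,2) by (simp add: algebra_simps)
  then have "zz N p = p + j + 1" unfolding zz_def using False by simp
  then show ?thesis using j assms by auto
qed

lemma rk_ps: assumes "N \<ge> 2" "L \<ge> N + 2" "k < L" shows "rk N L (ps N L k) = k"
proof -
  consider "k = L - 1" | "k = 0" | "N \<le> k" "k < L - 1" | "0 < k" "k < N" "2*k \<le> N" | "0 < k" "k < N" "2*k > N"
    using assms by linarith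
  then show ?thesis
  proof cases
    case 4 then show ?thesis using assms zz1[of k N] unfolding rk_def ps_def by auto
  next
    case 5 then show ?thesis using assms zz2[of N k] unfolding rk_def ps_def by auto
  qed (use assms in \<open>auto simp: rk_def ps_def\<close>)
qed

lemma ps_rk: assumes "N \<ge> 2" "L \<ge> N + 2" "p < L" shows "ps N L (rk N L p) = p"
proof -
  consider "p = L - 1" | "p = L - 2" | "N - 1 \<le> p" "p < L - 2" | "p \<le> N - 2"
    using assms by linarith
  then show ?thesis
  proof cases
    case 4 then show ?thesis using assms zz_inv[of p N] unfolding rk_def ps_def by auto
  qed (use assms in \<open>auto simp: rk_def ps_def\<close>)
qed



lemma lex_trans: "lex_less a b \<Longrightarrow> lex_less b c \<Longrightarrow> lex_less a c"
proof -
  assume "lex_less a b" "lex_less b c"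
  then obtain n m where n: "\<forall>i<n. a i = b i" "a n < b n" and m: "\<forall>i<m. b i = c i" "b m < c m"
    unfolding lex_less_def by blast
  define k where "k = min n m"
  have 1: "\<forall>i<k. a i = c i" using n(1) m(1) unfolding k_def by simp
  have 2: "a k < c k"
  proof (cases "n < m")
    case True then show ?thesis using n m unfolding k_def by simp
  next
    case False
    then have "k = m" unfolding k_def by simp
    moreover have "a m \<le> b m" using n False by (cases "n = m") auto
    ultimately show ?thesis using m by simp
  qed
  show ?thesis unfolding lex_less_def using 1 2 by blast
qed

lemma lex_asym: "lex_less a b \<Longrightarrow> \<not> lex_less b a"
proof
  assume "lex_less a b" "lex_less b a"
  then obtain n m where n: "\<forall>i<n. a i = b i" "a n < b n" and m: "\<forall>i<m. b i = a i" "b m < a m"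
    unfolding lex_less_def by blast
  consider "n < m" | "m < n" | "n = m" by linarith
  then show False
  proof cases
    case 1 then show False using n m(1) by (metis less_not_refl)
  next
    case 2 then show False using m n(1) by (metis less_not_refl)
  next
    case 3 then show False using n m by simp
  qed
qed

lemma lex_at: "(\<forall>m<n. \<omega> (p + m) = \<omega> (q + m)) \<Longrightarrow> \<omega> (p + n) < \<omega> (q + n)
  \<Longrightarrow> lex_less (shift_pow p \<omega>) (shift_pow q \<omega>)"
  unfolding lex_less_def shift_pow_def by (intro exI[of _ n]) (auto simp: add.commute)

lemma lex_first: "\<omega> p < \<omega> q \<Longrightarrow> lex_less (shift_pow p \<omega>) (shift_pow q \<omega>)"
  using lex_at[of 0 \<omega> p q] by simp

lemma strict_sym: "lex_less (shift_pow a \<omega>) (shift_pow b \<omega>) \<Longrightarrow>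
   lex_less (shift_pow (Suc b) \<omega>) (shift_pow (Suc a) \<omega>) \<Longrightarrow> \<omega> a < \<omega> b"
proof -
  assume h1: "lex_less (shift_pow a \<omega>) (shift_pow b \<omega>)" and h2: "lex_less (shift_pow (Suc b) \<omega>) (shift_pow (Suc a) \<omega>)"
  obtain n where n: "\<forall>i<n. \<omega> (i + a) = \<omega> (i + b)" "\<omega> (n + a) < \<omega> (n + b)"
    using h1 unfolding lex_less_def shift_pow_def by blast
  show ?thesis
  proof (cases n)
    case 0 then show ?thesis using n by simp
  next
    case (Suc n')
    have "lex_less (shift_pow (Suc a) \<omega>) (shift_pow (Suc b) \<omega>)"
      unfolding lex_less_def shift_pow_def
      using n Suc by (intro exI[of _ n']) auto
    then show ?thesis using h2 lex_asym by blast
  qed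
qed

lemma chain: assumes st: "\<And>k. Suc k < M \<Longrightarrow> lex_less (f k) (f (Suc k))"
  shows "j < k \<Longrightarrow> k < M \<Longrightarrow> lex_less (f j) (f k)"
proof (induction k)
  case 0 then show ?case by simp
next
  case (Suc k)
  show ?case
  proof (cases "j = k")
    case True then show ?thesis using st Suc.prems by simp
  next
    case False
    then have "lex_less (f j) (f k)" using Suc.IH Suc.prems by simp
    moreover have "lex_less (f k) (f (Suc k))" using st Suc.prems by simp
    ultimately show ?thesis using lex_trans by blast
  qed
qed


lemma A1: "\<not> (min (N - 1) (a - 1) < min (N-1) (b - 1)) \<Longrightarrow> a < b \<Longrightarrow> (2::nat) \<le> N \<Longrightarrow> N \<le> a \<or> (a = 0 \<and> b = 1)"
  by (simp add: min_def split: if_splits; linarith)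
lemma A2: "N - 1 \<le> min (N-1) (if r0 < a then a-1 else a) \<Longrightarrow> a \<noteq> r0 \<Longrightarrow> 1 \<le> r0 \<Longrightarrow> r0 \<le> N - 1 \<Longrightarrow> (N::nat) \<le> a"
  by (simp add: min_def split: if_splits; linarith)
lemma A3: "\<not> (min (N-1) (if r0 < a then a-1 else a) < min (N-1) (if r0 < b then b-1 else b)) \<Longrightarrow> a \<noteq> r0 \<Longrightarrow> b \<noteq> r0 \<Longrightarrow> 1 \<le> r0 \<Longrightarrow> r0 \<le> N - 1 \<Longrightarrow> a < b \<Longrightarrow> (N::nat) \<le> a"
  by (simp add: min_def split: if_splits; linarith)

lemma shift_shift: "shift_pow a (shift_pow n \<omega>) = shift_pow (a + n) \<omega>"
  unfolding shift_pow_def by (simp add: add.assoc)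

definition fpat :: "nat \<Rightarrow> nat \<Rightarrow> nat list" where
  "fpat N L = map (ps N L) [0..<L]"

definition w0 :: "nat \<Rightarrow> nat \<Rightarrow> nat \<Rightarrow> nat" where
  "w0 N L p = min (N - 1) (rk N L (p mod (L - 1)) - 1)"

definition w1 :: "nat \<Rightarrow> nat \<Rightarrow> nat \<Rightarrow> nat" where
  "w1 N L p = (if L - 1 \<le> p then N - 1 else if p = 0 then 0 else
     min (N - 1) (if rk N L 0 < rk N L p then rk N L p - 1 else rk N L p))"

context
  fixes N L :: nat
  assumes N2: "N \<ge> 2" and LN: "L \<ge> N + 2"
begin

lemma rk_zig: "p \<le> N - 2 \<Longrightarrow> rk N L p = zz N p"
  using N2 LN unfolding rk_def by auto
lemma rk_run: "N - 1 \<le> p \<Longrightarrow> p \<le> L - 3 \<Longrightarrow> rk N L p = L + N - 3 - p"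
  using N2 LN unfolding rk_def by auto
lemma rk_Lm2: "rk N L (L - 2) = 0"
  using N2 LN unfolding rk_def by auto
lemma rk_Lm1: "rk N L (L - 1) = L - 1"
  using N2 LN unfolding rk_def by auto
lemma zz_even: "p \<le> N \<Longrightarrow> N - p = 2*j \<Longrightarrow> zz N p = j"
  unfolding zz_def by simp
lemma zz_odd: "p \<le> N \<Longrightarrow> N - p = 2*j + 1 \<Longrightarrow> zz N p = p + j + 1"
proof -
  assume a: "p \<le> N" "N - p = 2*j + 1"
  have "N + p + 1 = 2 * (p + j + 1)" using a by (simp add: algebra_simps)
  then show ?thesis unfolding zz_def using a by simp
qed
lemma ps_0: "ps N L 0 = L - 2"
  using N2 LN unfolding ps_def by auto
lemma ps_lo: "1 \<le> k \<Longrightarrow> k < N \<Longrightarrow> 2*k \<le> N \<Longrightarrow> ps N L k = N - 2*k"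
  using N2 LN unfolding ps_def by auto
lemma ps_hi: "k < N \<Longrightarrow> 2*k > N \<Longrightarrow> ps N L k = 2*k - N - 1"
  using N2 LN unfolding ps_def by auto
lemma ps_run: "N \<le> k \<Longrightarrow> k < L - 1 \<Longrightarrow> ps N L k = L + N - 3 - k"
  using N2 LN unfolding ps_def by auto

lemma strict_step: assumes "k < N"
  shows "rk N L (ps N L (Suc k) + 1) < rk N L (ps N L k + 1)"
proof -
  consider "k = 0" | "1 \<le> k" "2*k+2 \<le> N" | "1 \<le> k" "2*k = N" "k+1 < N"
    | "1 \<le> k" "2*k + 1 = N" "k+1 < N" | "2*k > N" "k + 1 < N" | "k + 1 = N" "1 \<le> k"
    using assms by linarith
  then show ?thesis
  proof cases
    case 1
    have a: "ps N L 0 + 1 = L - 1" using ps_0 N2 LN by simp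
    have b: "ps N L (Suc 0) + 1 = N - 1" using ps_lo[of 1] N2 by simp
    show ?thesis using 1 a b rk_Lm1 rk_run[of "N - 1"] N2 LN by simp
  next
    case 2
    have a: "ps N L k + 1 = N - 2*k + 1" using ps_lo 2 by simp
    have b: "ps N L (Suc k) + 1 = N - 2*k - 1" using ps_lo[of "Suc k"] 2 by simp
    have rb: "rk N L (N - 2*k - 1) = N - k"
      using rk_zig[of "N - 2*k - 1"] zz_odd[of "N - 2*k - 1" k] 2 by simp
    show ?thesis
    proof (cases "k = 1")
      case True
      then have "N - 2*k + 1 = N - 1" using 2 by simp
      then show ?thesis using a b rb rk_run[of "N - 1"] 2 N2 LN by simp
    next
      case False
      have "rk N L (N - 2*k + 1) = N - k + 1"
        using rk_zig[of "N - 2*k + 1"] zz_odd[of "N - 2*k + 1" "k - 1"] 2 False by simp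
      then show ?thesis using a b rb 2 by simp
    qed
  next
    case 3
    have a: "ps N L k = 0" using ps_lo 3 by simp
    have b: "ps N L (Suc k) = 1" using ps_hi[of "Suc k"] 3 by simp
    have r1: "rk N L 1 = k + 1" using rk_zig[of 1] zz_odd[of 1 "k - 1"] 3 by simp
    have r2: "rk N L 2 = k - 1" using rk_zig[of 2] zz_even[of 2 "k - 1"] 3 by simp
    show ?thesis using a b r1 r2 by (simp add: numeral_2_eq_2)
  next
    case 4
    have a: "ps N L k = 1" using ps_lo 4 by simp
    have b: "ps N L (Suc k) = 0" using ps_hi[of "Suc k"] 4 by simp
    have r1: "rk N L 1 = k" using rk_zig[of 1] zz_even[of 1 k] 4 by simp
    show ?thesis
    proof (cases "k = 1")
      case True
      then show ?thesis using a b r1 rk_run[of 2] 4 LN by (simp add: numeral_2_eq_2)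
    next
      case False
      have "rk N L 2 = k + 2" using rk_zig[of 2] zz_odd[of 2 "k - 1"] 4 False by simp
      then show ?thesis using a b r1 by (simp add: numeral_2_eq_2)
    qed
  next
    case 5
    have a: "ps N L k = 2*k - N - 1" using ps_hi 5 by simp
    have b: "ps N L (Suc k) = 2*k - N + 1" using ps_hi[of "Suc k"] 5 by simp
    have r1: "rk N L (2*k - N) = N - k" using rk_zig[of "2*k - N"] zz_even[of "2*k - N" "N - k"] 5 by simp
    have r2: "rk N L (2*k - N + 2) = N - k - 1"
      using rk_zig[of "2*k - N + 2"] zz_even[of "2*k - N + 2" "N - k - 1"] 5 by simp
    show ?thesis using a b r1 r2 5 by (simp add: Suc_diff_Suc)
  next
    case 6
    have b: "ps N L (Suc k) = L - 3" using ps_run[of "Suc k"] 6 LN by simp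
    have rb: "rk N L (L - 2) = 0" by (rule rk_Lm2)
    have bb: "ps N L (Suc k) + 1 = L - 2" using b LN N2 by linarith
    show ?thesis
    proof (cases "N = 2")
      case True
      then have a: "ps N L k = 0" using ps_lo[of k] 6 by simp
      show ?thesis using a bb rb rk_run[of 1] True 6 LN by simp
    next
      case False
      then have a: "ps N L k = N - 3" using ps_hi[of k] 6 N2 by simp
      have "rk N L (N - 2) = 1" using rk_zig[of "N - 2"] zz_even[of "N - 2" 1] False N2 by simp
      moreover have "ps N L k + 1 = N - 2" using a False N2 by linarith
      ultimately show ?thesis using bb rb by simp
    qed
  qed
qed

lemma rk_lt: "p < L \<Longrightarrow> rk N L p < L"
proof -
  assume p: "p < L"
  consider "p = L - 1" | "p = L - 2" | "N - 1 \<le> p" "p \<le> L - 3" | "p \<le> N - 2"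
    using p by linarith
  then show ?thesis
  proof cases
    case 1 then show ?thesis using rk_Lm1 LN by simp
  next
    case 2 then show ?thesis using rk_Lm2 LN by simp
  next
    case 3 then show ?thesis using rk_run[of p] LN by simp
  next
    case 4
    then have "rk N L p \<le> N - 1" using rk_zig[of p] zz_inv[of p N] N2 by simp
    then show ?thesis using LN by linarith
  qed
qed

lemma ps_lt: "k < L \<Longrightarrow> ps N L k < L"
  using N2 LN unfolding ps_def by auto

lemma rk_ps': "k < L \<Longrightarrow> rk N L (ps N L k) = k" using rk_ps N2 LN by blast
lemma ps_rk': "p < L \<Longrightarrow> ps N L (rk N L p) = p" using ps_rk N2 LN by blast

lemma rk_ge_N: "p \<le> L - 2 \<Longrightarrow> N \<le> rk N L p \<Longrightarrow> N - 1 \<le> p \<and> p \<le> L - 3"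
proof -
  assume p: "p \<le> L - 2" "N \<le> rk N L p"
  have "\<not> p \<le> N - 2"
  proof
    assume "p \<le> N - 2"
    then have "rk N L p \<le> N - 1" using rk_zig zz_inv[of p N] N2 by auto
    then show False using p N2 by linarith
  qed
  moreover have "p \<noteq> L - 2" using p rk_Lm2 N2 by auto
  ultimately show ?thesis using p by linarith
qed

lemma rk0: "1 \<le> rk N L 0 \<and> rk N L 0 \<le> N - 1"
  using rk_zig[of 0] zz_inv[of 0 N] N2 by auto

lemma fpat_nth: "k < L \<Longrightarrow> fpat N L ! k = ps N L k"
  unfolding fpat_def by simp

lemma fpat_perm: "fpat N L \<in> perms L"
proof -
  have inj: "inj_on (ps N L) {0..<L}"
    by (rule inj_on_inverseI[where g = "rk N L"]) (use rk_ps' N2 LN in auto)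
  have "ps N L ` {0..<L} \<subseteq> {0..<L}" using ps_lt N2 LN by auto
  moreover have "{0..<L} \<subseteq> ps N L ` {0..<L}"
  proof
    fix p assume "p \<in> {0..<L}"
    then have "p = ps N L (rk N L p)" "rk N L p \<in> {0..<L}" using ps_rk' rk_lt N2 LN by auto
    then show "p \<in> ps N L ` {0..<L}" by blast
  qed
  ultimately have "ps N L ` {0..<L} = {0..<L}" by blast
  then show ?thesis unfolding perms_def fpat_def using inj by (simp add: distinct_map)
qed

lemma def_lex: assumes d: "defines_pat \<omega> (fpat N L)" and pq: "p < L" "q < L" "rk N L p < rk N L q"
  shows "lex_less (shift_pow p \<omega>) (shift_pow q \<omega>)"
proof -
  have st: "\<And>k. Suc k < L \<Longrightarrow> lex_less (shift_pow (ps N L k) \<omega>) (shift_pow (ps N L (Suc k)) \<omega>)"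
    using d unfolding defines_pat_def by (simp add: fpat_nth fpat_def)
  have "lex_less (shift_pow (ps N L (rk N L p)) \<omega>) (shift_pow (ps N L (rk N L q)) \<omega>)"
    using chain[of L "\<lambda>k. shift_pow (ps N L k) \<omega>", OF st] pq rk_lt N2 LN by blast
  then show ?thesis using ps_rk' pq N2 LN by simp
qed

lemma fpat_forb: "forbidden N (fpat N L)"
proof -
  have "\<not> (\<exists>\<omega>\<in>seqs N. defines_pat \<omega> (fpat N L))"
  proof
    assume "\<exists>\<omega>\<in>seqs N. defines_pat \<omega> (fpat N L)"
    then obtain \<omega> where om: "\<omega> \<in> seqs N" and d: "defines_pat \<omega> (fpat N L)" by blast
    have "k \<le> N \<Longrightarrow> k \<le> \<omega> (ps N L k)" for k
    proof (induction k)
      case 0 then show ?case by simp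
    next
      case (Suc k)
      define a where "a = ps N L k"
      define b where "b = ps N L (Suc k)"
      have kL: "Suc k < L - 1" using Suc.prems LN by linarith
      have aL: "a < L" "rk N L a = k" using ps_lt[of k] rk_ps'[of k] kL unfolding a_def by auto
      have bL: "b < L" "rk N L b = Suc k" using ps_lt[of "Suc k"] rk_ps'[of "Suc k"] kL unfolding b_def by auto
      have "a \<noteq> L - 1" using aL rk_Lm1 kL by auto
      then have a1: "Suc a < L" using aL by linarith
      have "b \<noteq> L - 1" using bL rk_Lm1 kL by auto
      then have b1: "Suc b < L" using bL by linarith
      have l1: "lex_less (shift_pow a \<omega>) (shift_pow b \<omega>)" using def_lex[OF d] aL bL by simp
      have "rk N L (Suc b) < rk N L (Suc a)" using strict_step[of k] Suc.prems unfolding a_def b_def by simp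
      then have l2: "lex_less (shift_pow (Suc b) \<omega>) (shift_pow (Suc a) \<omega>)" using def_lex[OF d] a1 b1 by simp
      have "\<omega> a < \<omega> b" using strict_sym[OF l1 l2] .
      then show ?case using Suc unfolding a_def b_def by simp
    qed
    then have "N \<le> \<omega> (ps N L N)" by simp
    moreover have "\<omega> (ps N L N) < N" using om unfolding seqs_def by simp
    ultimately show False by simp
  qed
  then show ?thesis unfolding forbidden_def using fpat_perm by (simp add: fpat_def)
qed

lemma w0_val: "p \<le> L - 2 \<Longrightarrow> w0 N L p = min (N - 1) (rk N L p - 1)"
  unfolding w0_def using LN by simp

lemma w0_run: "N - 1 \<le> x \<Longrightarrow> x \<le> L - 3 \<Longrightarrow> w0 N L x = N - 1"
proof -
  assume x: "N - 1 \<le> x" "x \<le> L - 3"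
  have "rk N L x = L + N - 3 - x" using rk_run x by simp
  then have "N - 1 \<le> rk N L x - 1" using x LN by linarith
  then show ?thesis using w0_val[of x] x by simp
qed

lemma w0_seqs: "w0 N L \<in> seqs N"
  unfolding seqs_def w0_def using N2 by auto

lemma W0: assumes pq: "p \<le> L - 2" "q \<le> L - 2" "rk N L p < rk N L q"
  shows "lex_less (shift_pow p (w0 N L)) (shift_pow q (w0 N L))"
proof (cases "w0 N L p < w0 N L q")
  case True then show ?thesis by (rule lex_first)
next
  case False
  then have "\<not> (min (N - 1) (rk N L p - 1) < min (N - 1) (rk N L q - 1))"
    using w0_val[OF pq(1)] w0_val[OF pq(2)] by metis
  then have cs: "N \<le> rk N L p \<or> (rk N L p = 0 \<and> rk N L q = 1)"
    using A1[of N "rk N L p" "rk N L q"] pq(3) N2 by linarith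
  show ?thesis
  proof (cases "N \<le> rk N L p")
    case True
    have p': "N - 1 \<le> p" "p \<le> L - 3" using rk_ge_N pq True by auto
    have q': "N - 1 \<le> q" "q \<le> L - 3" using rk_ge_N[of q] pq True by auto
    have "q < p" using rk_run[of p] rk_run[of q] p' q' pq(3) by simp
    show ?thesis
    proof (rule lex_at[of "L - 2 - p"])
      show "\<forall>m<L - 2 - p. w0 N L (p + m) = w0 N L (q + m)"
      proof (intro allI impI)
        fix m assume m: "m < L - 2 - p"
        have "w0 N L (p + m) = N - 1" using w0_run[of "p + m"] p' m by simp
        moreover have "w0 N L (q + m) = N - 1" using w0_run[of "q + m"] p' q' m \<open>q < p\<close> by simp
        ultimately show "w0 N L (p + m) = w0 N L (q + m)" by simp
      qed
      have e: "p + (L - 2 - p) = L - 2" using p' by simp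
      have "w0 N L (L - 2) = 0" using w0_val[of "L - 2"] rk_Lm2 by simp
      then have "w0 N L (p + (L - 2 - p)) = 0" unfolding e .
      moreover have "w0 N L (q + (L - 2 - p)) = N - 1"
        using w0_run[of "q + (L - 2 - p)"] p' q' \<open>q < p\<close> by simp
      ultimately show "w0 N L (p + (L - 2 - p)) < w0 N L (q + (L - 2 - p))" using N2 by simp
    qed
  next
    case False
    then have r: "rk N L p = 0" "rk N L q = 1" using cs by auto
    have pL: "p = L - 2" using ps_rk'[of p] r ps_0 LN pq by simp
    have qN: "q = N - 2" using ps_rk'[of q] r ps_lo[of 1] N2 LN pq by simp
    show ?thesis
    proof (rule lex_at[of 1])
      show "\<forall>m<1. w0 N L (p + m) = w0 N L (q + m)" using w0_val pq r by simp
      have "w0 N L (p + 1) = rk N L 0 - 1"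
      proof -
        have "p + 1 = L - 1" using pL LN by simp
        then have "(p + 1) mod (L - 1) = 0" by simp
        then have "w0 N L (p + 1) = min (N - 1) (rk N L 0 - 1)" unfolding w0_def by simp
        moreover have "rk N L 0 - 1 \<le> N - 1" using rk0 by linarith
        ultimately show ?thesis by simp
      qed
      moreover have "w0 N L (q + 1) = N - 1"
      proof -
        have "q + 1 = N - 1" using qN N2 by simp
        moreover have "N - 1 \<le> L - 3" using LN by simp
        ultimately show ?thesis using w0_run[of "N - 1"] by simp
      qed
      moreover have "rk N L 0 - 1 < N - 1" using rk0 N2 by linarith
      ultimately show "w0 N L (p + 1) < w0 N L (q + 1)" by simp
    qed
  qed
qed

lemma w1_seqs: "w1 N L \<in> seqs N"
  unfolding seqs_def w1_def using N2 by auto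

lemma w1_run: "N - 1 \<le> x \<Longrightarrow> x \<le> L - 3 \<Longrightarrow> w1 N L x = N - 1"
proof -
  assume x: "N - 1 \<le> x" "x \<le> L - 3"
  have "rk N L x = L + N - 3 - x" using rk_run x by simp
  then have a: "N \<le> rk N L x" using x LN by linarith
  then have b: "rk N L 0 < rk N L x" using rk0 N2 by linarith
  have c: "x \<noteq> 0" "\<not> L - 1 \<le> x" using x N2 LN by auto
  show ?thesis unfolding w1_def using a b c by simp
qed

lemma w1_top: "L - 1 \<le> x \<Longrightarrow> w1 N L x = N - 1"
  unfolding w1_def by simp

lemma w1_Lm2: "w1 N L (L - 2) = 0"
  using rk_Lm2 rk0 N2 LN unfolding w1_def by auto

lemma rk_ne0: "p < L \<Longrightarrow> p \<noteq> 0 \<Longrightarrow> rk N L p \<noteq> rk N L 0"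
proof
  assume p: "p < L" "p \<noteq> 0" and e: "rk N L p = rk N L 0"
  have "p = ps N L (rk N L p)" using ps_rk'[of p] p by simp
  also have "\<dots> = ps N L (rk N L 0)" using e by simp
  also have "\<dots> = 0" using ps_rk'[of 0] LN by simp
  finally show False using p by simp
qed

lemma W1: assumes pq: "1 \<le> p" "p \<le> L - 1" "1 \<le> q" "q \<le> L - 1" "rk N L p < rk N L q"
  shows "lex_less (shift_pow p (w1 N L)) (shift_pow q (w1 N L))"
proof (cases "w1 N L p < w1 N L q")
  case True then show ?thesis by (rule lex_first)
next
  case False
  have qL: "rk N L q < L" using rk_lt[of q] pq LN by simp
  have pL2: "p \<le> L - 2"
  proof (rule ccontr)
    assume "\<not> p \<le> L - 2"
    then have "p = L - 1" using pq by simp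
    then show False using rk_Lm1 qL pq by simp
  qed
  have ne: "rk N L p \<noteq> rk N L 0" using rk_ne0[of p] pq LN by simp
  have r0: "1 \<le> rk N L 0" "rk N L 0 \<le> N - 1" using rk0 by auto
  have pv: "w1 N L p = min (N - 1) (if rk N L 0 < rk N L p then rk N L p - 1 else rk N L p)"
    using pL2 pq LN unfolding w1_def by auto
  have rN: "N \<le> rk N L p"
  proof (cases "q = L - 1")
    case True
    then have "N - 1 \<le> w1 N L p" using False w1_top by simp
    then show ?thesis using pv ne r0 A2 by metis
  next
    case qn: False
    have neq: "rk N L q \<noteq> rk N L 0" using rk_ne0[of q] pq LN by simp
    have qv: "w1 N L q = min (N - 1) (if rk N L 0 < rk N L q then rk N L q - 1 else rk N L q)"
      using qn pq LN unfolding w1_def by auto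
    show ?thesis using False pv qv ne neq r0 pq(5) A3 by metis
  qed
  have p': "N - 1 \<le> p" "p \<le> L - 3" using rk_ge_N pL2 rN by auto
  have qcase: "q = L - 1 \<or> (N - 1 \<le> q \<and> q < p)"
  proof (cases "q = L - 1")
    case False
    then have "q \<le> L - 2" using pq by simp
    then have q': "N - 1 \<le> q" "q \<le> L - 3" using rk_ge_N[of q] pq rN by auto
    then have "q < p" using rk_run[of p] rk_run[of q] p' pq(5) by simp
    then show ?thesis using q' by simp
  qed simp
  show ?thesis
  proof (rule lex_at[of "L - 2 - p"])
    show "\<forall>m<L - 2 - p. w1 N L (p + m) = w1 N L (q + m)"
    proof (intro allI impI)
      fix m assume m: "m < L - 2 - p"
      have "w1 N L (p + m) = N - 1" using w1_run p' m by simp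
      moreover have "w1 N L (q + m) = N - 1" using qcase w1_run w1_top p' m by auto
      ultimately show "w1 N L (p + m) = w1 N L (q + m)" by simp
    qed
    have "p + (L - 2 - p) = L - 2" using p' by simp
    then have "w1 N L (p + (L - 2 - p)) = 0" using w1_Lm2 by simp
    moreover have "w1 N L (q + (L - 2 - p)) = N - 1" using qcase w1_run w1_top p' by auto
    ultimately show "w1 N L (p + (L - 2 - p)) < w1 N L (q + (L - 2 - p))" using N2 by simp
  qed
qed

end


theorem proposition5:
  fixes N L :: nat
  assumes "N \<ge> 2" and "L \<ge> N + 2"
  shows "\<exists>\<pi>. length \<pi> = L \<and> forbidden_root N \<pi>"
proof (intro exI conjI)
  note N2 = assms(1) and LN = assms(2)
  show "length (fpat N L) = L" unfolding fpat_def by simp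
  show "forbidden_root N (fpat N L)"
    unfolding forbidden_root_def
  proof (intro conjI notI)
    show "forbidden N (fpat N L)" using fpat_forb N2 LN by blast
  next
    assume "\<exists>\<pi>'. length \<pi>' < length (fpat N L) \<and> forbidden N \<pi>' \<and> outgrowth (fpat N L) \<pi>'"
    then obtain \<pi>' where len: "length \<pi>' < L" and fb: "forbidden N \<pi>'" and og: "outgrowth (fpat N L) \<pi>'"
      unfolding fpat_def by auto
    define M where "M = length \<pi>'"
    have perm': "\<pi>' \<in> perms M" using fb unfolding forbidden_def M_def by simp
    have lf: "length (fpat N L) = L" unfolding fpat_def by simp
    have "\<exists>n \<le> length (fpat N L) - length \<pi>'. \<exists>i :: nat \<Rightarrow> nat.
        (\<forall>k l. k < l \<and> l < length \<pi>' \<longrightarrow> i k < i l) \<and>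
        (\<forall>k < length \<pi>'. i k < length (fpat N L) \<and> fpat N L ! (i k) = \<pi>' ! k + n)"
      using og unfolding outgrowth_def by blast
    then obtain n i where mono: "\<forall>k l. k < l \<and> l < M \<longrightarrow> i k < i l"
      and iv: "\<forall>k < M. i k < L \<and> fpat N L ! (i k) = \<pi>' ! k + n"
      unfolding lf M_def by blast
    have elem: "k < M \<Longrightarrow> \<pi>' ! k < M" for k
    proof -
      assume k: "k < M"
      have "set \<pi>' = {0..<M}" "length \<pi>' = M" using perm' unfolding perms_def by auto
      then show "\<pi>' ! k < M" using k nth_mem[of k \<pi>'] by auto
    qed
    have pos: "k < M \<Longrightarrow> \<pi>' ! k + n < L \<and> rk N L (\<pi>' ! k + n) = i k" for k
    proof -
      assume k: "k < M"
      have ik: "i k < L" "fpat N L ! (i k) = \<pi>' ! k + n" using iv k by auto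
      have "ps N L (i k) = \<pi>' ! k + n" using ik fpat_nth[OF N2 LN ik(1)] by simp
      moreover have "i k < L" using ik by simp
      ultimately show ?thesis using rk_ps'[OF N2 LN, of "i k"] ps_lt[OF N2 LN, of "i k"] by simp
    qed
    have hML: "M < L" using len M_def by simp
    show False
    proof (cases "n = 0")
      case True
      have "defines_pat (w0 N L) \<pi>'"
        unfolding defines_pat_def
      proof (intro allI impI)
        fix k assume k: "Suc k < length \<pi>'"
        then have k': "k < M" "Suc k < M" unfolding M_def by auto
        have "\<pi>' ! k < M" "\<pi>' ! Suc k < M" using elem k' by auto
        then have "\<pi>' ! k \<le> L - 2" "\<pi>' ! Suc k \<le> L - 2" using hML by auto
        moreover have "rk N L (\<pi>' ! k) < rk N L (\<pi>' ! Suc k)"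
          using pos[OF k'(1)] pos[OF k'(2)] mono k' True by simp
        ultimately show "lex_less (shift_pow (\<pi>' ! k) (w0 N L)) (shift_pow (\<pi>' ! Suc k) (w0 N L))"
          using W0[OF N2 LN] by blast
      qed
      then show False using fb w0_seqs[OF N2 LN] unfolding forbidden_def by blast
    next
      case False
      have "defines_pat (shift_pow n (w1 N L)) \<pi>'"
        unfolding defines_pat_def shift_shift
      proof (intro allI impI)
        fix k assume k: "Suc k < length \<pi>'"
        then have k': "k < M" "Suc k < M" unfolding M_def by auto
        have a: "1 \<le> \<pi>' ! k + n" "\<pi>' ! k + n \<le> L - 1" using pos[OF k'(1)] False by auto
        have b: "1 \<le> \<pi>' ! Suc k + n" "\<pi>' ! Suc k + n \<le> L - 1" using pos[OF k'(2)] False by auto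
        have "rk N L (\<pi>' ! k + n) < rk N L (\<pi>' ! Suc k + n)"
          using pos[OF k'(1)] pos[OF k'(2)] mono k' by simp
        then show "lex_less (shift_pow (\<pi>' ! k + n) (w1 N L)) (shift_pow (\<pi>' ! Suc k + n) (w1 N L))"
          using W1[OF N2 LN] a b by blast
      qed
      moreover have "shift_pow n (w1 N L) \<in> seqs N"
        using w1_seqs[OF N2 LN] unfolding seqs_def shift_pow_def by simp
      ultimately show False using fb unfolding forbidden_def by blast
    qed
  qed
qed

end
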